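(* Let $\Theta=(\theta_1,\theta_2,\theta_3)\in\mathbb{R}^3$ with $1,\theta_1,\theta_2,\theta_3$ linearly independent over $\mathbb{Z}$, and let $(x_l)$, $(\zeta_l)$, $(\mathbf{z}_l)$ be the associated best approximations, their errors and best approximation vectors. Let $\nu<k$ be indices and suppose that all vectors $\mathbf{z}_l$, $\nu\leqslant l\leqslant k$, lie in a certain two-dimensional linear subspace $\pi\subset\mathbb{R}^4$. Let $\Lambda=\pi\cap\mathbb{Z}^4$ be the corresponding two-dimensional lattice with two-dimensional fundamental volume $\det\Lambda$. Then for all $l$ with $\nu\leqslant l\leqslant k-1$, $$ C_1\det\Lambda\leqslant \zeta_l x_{l+1}\leqslant 2\det\Lambda, $$ where $$C_1=\left(2\sqrt{3\left(1+\left(|\theta_1|+\tfrac12\right)^2+\left(|\theta_2|+\tfrac12\right)^2+\left(|\theta_3|+\tfrac12\right)^2\right)}\right)^{-1}.$$ In particular, $\det\Lambda\geqslant \frac12\min(\zeta_\nu x_{\nu+1},\ \zeta_{k-1}x_k)$.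
   Context: For a real number $u$, $\|u\|$ is the distance from $u$ to the nearest integer. For an integer $x$ put $\zeta(x)=\max_{1\leqslant j\leqslant 3}\|\theta_j x\|$. A positive integer $x$ is a best approximation if $\zeta(x)=\min\{\zeta(x'): x'\in\mathbb{Z},\ 0<x'\leqslant x\}$. When $1,\theta_1,\theta_2,\theta_3$ are linearly independent over $\mathbb{Z}$, the best approximations form a sequence $x_1<x_2<\dots$ with $\zeta_1>\zeta_2>\dots$, where $\zeta_\nu=\zeta(x_\nu)$. Choose integers $y_{j,\nu}$ with $\|\theta_j x_\nu\|=|\theta_j x_\nu-y_{j,\nu}|$, and put $\mathbf{z}_\nu=(x_\nu,y_{1,\nu},y_{2,\nu},y_{3,\nu})\in\mathbb{Z}^4$ (the best approximation vectors). *)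

theory Defs
  imports "HOL-Analysis.Analysis"
begin

definition ndist :: "real \<Rightarrow> real" where
  "ndist u = infdist u \<int>"

definition zeta :: "real \<Rightarrow> real \<Rightarrow> real \<Rightarrow> int \<Rightarrow> real" where
  "zeta t1 t2 t3 x = Max {ndist (t1 * real_of_int x), ndist (t2 * real_of_int x), ndist (t3 * real_of_int x)}"

definition best_approx :: "real \<Rightarrow> real \<Rightarrow> real \<Rightarrow> int \<Rightarrow> bool" where
  "best_approx t1 t2 t3 x \<longleftrightarrow> 0 < x \<and>
     zeta t1 t2 t3 x = Min {zeta t1 t2 t3 x' | x'. 0 < x' \<and> x' \<le> x}"

definition int_points :: "(real^4) set \<Rightarrow> (real^4) set" where
  "int_points S = {v \<in> S. \<forall>i. v $ i \<in> \<int>}"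

definition covol2 :: "(real^4) set \<Rightarrow> real" where
  "covol2 L = (THE d. \<exists>u v. u \<in> L \<and> v \<in> L \<and>
      L = {of_int a *\<^sub>R u + of_int b *\<^sub>R v | a b. True} \<and>
      d = sqrt ((u \<bullet> u) * (v \<bullet> v) - (u \<bullet> v)\<^sup>2))"

end

theory Submission imports Defs begin

lemma nd_le: "m \<in> \<int> \<Longrightarrow> ndist u \<le> \<bar>u - m\<bar>"
  unfolding ndist_def using infdist_le[of m \<int> u] by (simp add: dist_real_def)

lemma nd_nonneg: "0 \<le> ndist u"
  unfolding ndist_def by (rule infdist_nonneg)

lemma nd_half: "ndist u \<le> 1/2"
proof -
  have "ndist u \<le> \<bar>u - of_int (round u)\<bar>" by (rule nd_le) simp
  also have "\<dots> \<le> 1/2" using of_int_round_abs_le[of u] by linarith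
  finally show ?thesis .
qed

lemma zeta_alt: "zeta t1 t2 t3 n = max (ndist (t1 * real_of_int n)) (max (ndist (t2 * real_of_int n)) (ndist (t3 * real_of_int n)))"
  by (simp add: zeta_def)

lemma setimg: "{f x' | x'::int. 0 < x' \<and> x' \<le> n} = f ` {1..n}"
  unfolding image_def by (auto simp: Bex_def) (metis int_one_le_iff_zero_less)

definition gram :: "real^4 \<Rightarrow> real^4 \<Rightarrow> real" where
  "gram u v = (u \<bullet> u) * (v \<bullet> v) - (u \<bullet> v)\<^sup>2"

lemma gram_comb: "gram (a *\<^sub>R u + b *\<^sub>R v) (c *\<^sub>R u + d *\<^sub>R v) = (a*d - b*c)\<^sup>2 * gram u v"
proof -
  have e: "(a *\<^sub>R u + b *\<^sub>R v) \<bullet> (c *\<^sub>R u + d *\<^sub>R v) = a*c*(u\<bullet>u) + (a*d+b*c)*(u\<bullet>v) + b*d*(v\<bullet>v)" for a b c d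
    by (simp add: inner_add_left inner_add_right inner_commute[of v u] algebra_simps)
  show ?thesis unfolding gram_def e[of a b c d] e[of a b a b] e[of c d c d]
    by (simp add: power2_eq_square algebra_simps)
qed

lemma gram_indep: assumes "gram u v > 0" "s *\<^sub>R u + t *\<^sub>R v = 0" shows "s = 0 \<and> t = 0"
proof -
  have 1: "s * (u\<bullet>u) + t * (u \<bullet> v) = 0"
    using arg_cong[OF assms(2), of "\<lambda>w. u \<bullet> w"] by (simp add: inner_add_right)
  have 2: "s * (u\<bullet>v) + t * (v \<bullet> v) = 0"
    using arg_cong[OF assms(2), of "\<lambda>w. v \<bullet> w"] by (simp add: inner_add_right inner_commute)
  have "s * gram u v = 0"
  proof -
    have "s * gram u v = (s * (u\<bullet>u) + t * (u \<bullet> v)) * (v\<bullet>v) - (s * (u\<bullet>v) + t * (v \<bullet> v)) * (u\<bullet>v)"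
      unfolding gram_def by (simp add: power2_eq_square algebra_simps)
    then show ?thesis using 1 2 by simp
  qed
  moreover have "t * gram u v = 0"
  proof -
    have "t * gram u v = (s * (u\<bullet>v) + t * (v \<bullet> v)) * (u\<bullet>u) - (s * (u\<bullet>u) + t * (u \<bullet> v)) * (u\<bullet>v)"
      unfolding gram_def by (simp add: power2_eq_square algebra_simps)
    then show ?thesis using 1 2 by simp
  qed
  ultimately show ?thesis using assms(1) by simp
qed

lemma gram_minors: "gram u v =
   ((u $ 1)*(v $ 2) - (u $ 2)*(v $ 1))\<^sup>2 + ((u $ 1)*(v $ 3) - (u $ 3)*(v $ 1))\<^sup>2 + ((u $ 1)*(v $ 4) - (u $ 4)*(v $ 1))\<^sup>2 +
   ((u $ 2)*(v $ 3) - (u $ 3)*(v $ 2))\<^sup>2 + ((u $ 2)*(v $ 4) - (u $ 4)*(v $ 2))\<^sup>2 + ((u $ 3)*(v $ 4) - (u $ 4)*(v $ 3))\<^sup>2"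
  unfolding gram_def inner_vec_def sum_4 by (simp add: power2_eq_square algebra_simps)

lemma gram_le: "gram u v \<le> (v \<bullet> v) * ((u - c *\<^sub>R v) \<bullet> (u - c *\<^sub>R v))"
proof -
  have "(v \<bullet> v) * ((u - c *\<^sub>R v) \<bullet> (u - c *\<^sub>R v)) - gram u v = (u \<bullet> v - c * (v \<bullet> v))\<^sup>2"
    unfolding gram_def by (simp add: inner_diff_left inner_diff_right inner_commute[of v u] power2_eq_square algebra_simps)
  then show ?thesis by (metis diff_ge_0_iff_ge zero_le_power2)
qed

lemma dist_aux:
  fixes t1 t2 t3 :: real and n m k1 k2 s :: int and i j :: nat
  assumes indep: "\<And>a0 a1 a2 a3 :: int.
      real_of_int a0 + real_of_int a1 * t1 + real_of_int a2 * t2 + real_of_int a3 * t3 = 0 \<Longrightarrow>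
      a0 = 0 \<and> a1 = 0 \<and> a2 = 0 \<and> a3 = 0"
  and n: "0 < n" and m: "0 < m" and i: "i \<in> {1,2,3}" and j: "j \<in> {1,2,3}" and s: "s = 1 \<or> s = -1"
  and eq: "(if i = 1 then t1 else if i = 2 then t2 else t3) * n - k1 =
            s * ((if j = 1 then t1 else if j = 2 then t2 else t3) * m - k2)"
  shows "n = m"
proof -
  define a where "a r = (if r = i then n else 0) - s*(if r = j then m else 0)" for r :: nat
  have "real_of_int (s*k2 - k1) + real_of_int (a 1) * t1 + real_of_int (a 2) * t2 + real_of_int (a 3) * t3 = 0"
    using i j eq by (auto simp: a_def algebra_simps)
  from indep[OF this] have "a 1 = 0" "a 2 = 0" "a 3 = 0" by auto
  then have "a i = 0" using i by auto
  then show ?thesis using n m s i j by (auto simp: a_def split: if_splits)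
qed

lemma coord_bound:
  fixes e e' D M XX xl z' :: real
  assumes "\<bar>e'\<bar> \<le> z'" "\<bar>D\<bar> \<le> M" "D = XX*e - xl*e'" "0 < xl" "xl < XX"
  shows "XX*\<bar>e\<bar> \<le> M + xl*z' \<and> XX*\<bar>e' - e\<bar> \<le> M + (XX - xl)*z'"
proof -
  have a: "xl * \<bar>e'\<bar> \<le> xl * z'" using assms by (intro mult_left_mono) auto
  have b: "(XX - xl) * \<bar>e'\<bar> \<le> (XX - xl) * z'" using assms by (intro mult_left_mono) auto
  have "XX*\<bar>e\<bar> = \<bar>D + xl * e'\<bar>" using assms by (simp add: abs_mult)
  also have "\<dots> \<le> \<bar>D\<bar> + \<bar>xl * e'\<bar>" by (rule abs_triangle_ineq)
  also have "\<bar>xl * e'\<bar> = xl * \<bar>e'\<bar>" using assms by (simp add: abs_mult)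
  finally have 1: "XX*\<bar>e\<bar> \<le> M + xl*z'" using a assms by linarith
  have eq: "XX * (e' - e) = -D + (XX - xl) * e'" using assms by (simp add: algebra_simps)
  have "XX*\<bar>e' - e\<bar> = \<bar>XX * (e' - e)\<bar>" using assms by (simp add: abs_mult)
  also have "\<dots> = \<bar>-D + (XX - xl) * e'\<bar>" using eq by simp
  also have "\<dots> \<le> \<bar>-D\<bar> + \<bar>(XX - xl) * e'\<bar>" by (rule abs_triangle_ineq)
  also have "\<bar>(XX - xl) * e'\<bar> = (XX - xl) * \<bar>e'\<bar>" using assms by (simp add: abs_mult)
  finally have 2: "XX*\<bar>e' - e\<bar> \<le> \<bar>D\<bar> + (XX - xl) * \<bar>e'\<bar>" by simp
  then have 2: "XX*\<bar>e' - e\<bar> \<le> M + (XX - xl)*z'" using b assms(2) by linarith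
  show ?thesis using 1 2 by simp
qed

lemma sq_bound: "\<bar>a::real\<bar> \<le> b \<Longrightarrow> a\<^sup>2 \<le> b\<^sup>2"
  using power_mono[of "\<bar>a\<bar>" b 2] by simp



lemma gap_lemma:
  fixes t1 t2 t3 :: real and x :: "nat \<Rightarrow> int"
  assumes x_mono: "strict_mono_on {1..} x"
    and x_best: "x ` {1..} = {n. best_approx t1 t2 t3 n}"
    and l: "1 \<le> l" and n: "0 < n" "n < x (Suc l)"
  shows "zeta t1 t2 t3 (x l) \<le> zeta t1 t2 t3 n"
proof -
  define ze where "ze = zeta t1 t2 t3"
  let ?S = "ze ` {1..n}"
  have fin: "finite ?S" "?S \<noteq> {}" using n by auto
  obtain m where m: "m \<in> {1..n}" "ze m = Min ?S" using Min_in[OF fin] by auto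
  have "Min (ze ` {1..m}) = ze m"
  proof (rule antisym)
    show "Min (ze ` {1..m}) \<le> ze m" using m(1) by (intro Min_le) auto
    have "Min ?S \<le> Min (ze ` {1..m})"
      by (rule Min_antimono[of "ze ` {1..m}" ?S]) (use m in auto)
    then show "ze m \<le> Min (ze ` {1..m})" using m by simp
  qed
  then have "best_approx t1 t2 t3 m" using m unfolding best_approx_def setimg ze_def by auto
  then obtain p where p: "p \<ge> 1" "m = x p" using x_best by (metis (mono_tags, lifting) atLeast_iff imageE mem_Collect_eq)
  have "p \<le> l"
  proof (rule ccontr)
    assume "\<not> p \<le> l"
    then have "x (Suc l) \<le> x p" using x_mono l by (intro strict_mono_on_leD[OF x_mono]) auto
    then show False using p m n by auto
  qed
  then have "x p \<le> x l" using x_mono p by (intro strict_mono_on_leD[OF x_mono]) auto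
  have bl: "best_approx t1 t2 t3 (x l)" using x_best l by auto
  then have "ze (x l) = Min (ze ` {1..x l})" unfolding best_approx_def setimg ze_def by auto
  also have "\<dots> \<le> ze (x p)" using \<open>x p \<le> x l\<close> p m(1)
    by (intro Min_le) auto
  also have "\<dots> = Min ?S" using p m by simp
  also have "\<dots> \<le> ze n" using n by (intro Min_le) auto
  finally show ?thesis unfolding ze_def .
qed

theorem lemma1:
  fixes t1 t2 t3 :: real
    and x :: "nat \<Rightarrow> int"
    and z :: "nat \<Rightarrow> real^4"
    and \<pi> :: "(real^4) set"
    and \<nu> k :: nat
  assumes indep: "\<And>a0 a1 a2 a3 :: int.
      real_of_int a0 + real_of_int a1 * t1 + real_of_int a2 * t2 + real_of_int a3 * t3 = 0 \<Longrightarrow>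
      a0 = 0 \<and> a1 = 0 \<and> a2 = 0 \<and> a3 = 0"
    and x_mono: "strict_mono_on {1..} x"
    and x_best: "x ` {1..} = {n. best_approx t1 t2 t3 n}"
    and z_def: "\<And>l. l \<ge> 1 \<Longrightarrow>
      z l $ 1 = real_of_int (x l) \<and>
      z l $ 2 \<in> \<int> \<and> ndist (t1 * real_of_int (x l)) = \<bar>t1 * real_of_int (x l) - z l $ 2\<bar> \<and>
      z l $ 3 \<in> \<int> \<and> ndist (t2 * real_of_int (x l)) = \<bar>t2 * real_of_int (x l) - z l $ 3\<bar> \<and>
      z l $ 4 \<in> \<int> \<and> ndist (t3 * real_of_int (x l)) = \<bar>t3 * real_of_int (x l) - z l $ 4\<bar>"
    and nu_pos: "1 \<le> \<nu>"
    and nu_k: "\<nu> < k"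
    and pi_sub: "subspace \<pi>"
    and pi_dim: "dim \<pi> = 2"
    and z_in: "\<And>l. \<nu> \<le> l \<Longrightarrow> l \<le> k \<Longrightarrow> z l \<in> \<pi>"
  shows "(\<forall>l. \<nu> \<le> l \<and> l \<le> k - 1 \<longrightarrow>
            1 / (2 * sqrt (3 * (1 + (\<bar>t1\<bar> + 1/2)\<^sup>2 + (\<bar>t2\<bar> + 1/2)\<^sup>2 + (\<bar>t3\<bar> + 1/2)\<^sup>2)))
              * covol2 (int_points \<pi>) \<le> zeta t1 t2 t3 (x l) * real_of_int (x (l + 1)) \<and>
            zeta t1 t2 t3 (x l) * real_of_int (x (l + 1)) \<le> 2 * covol2 (int_points \<pi>))
       \<and> covol2 (int_points \<pi>) \<ge> 1/2 * min (zeta t1 t2 t3 (x \<nu>) * real_of_int (x (\<nu> + 1)))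
                                           (zeta t1 t2 t3 (x (k - 1)) * real_of_int (x k))"
proof -
  define ze where "ze = zeta t1 t2 t3"
  define X where "X l = real_of_int (x l)" for l
  define e1 where "e1 l = t1 * X l - z l $ 2" for l
  define e2 where "e2 l = t2 * X l - z l $ 3" for l
  define e3 where "e3 l = t3 * X l - z l $ 4" for l
  define L where "L = int_points \<pi>"
  define C1 where "C1 = 1 / (2 * sqrt (3 * (1 + (\<bar>t1\<bar> + 1/2)\<^sup>2 + (\<bar>t2\<bar> + 1/2)\<^sup>2 + (\<bar>t3\<bar> + 1/2)\<^sup>2)))"
  define S where "S = 1 + (\<bar>t1\<bar> + 1/2)\<^sup>2 + (\<bar>t2\<bar> + 1/2)\<^sup>2 + (\<bar>t3\<bar> + 1/2)\<^sup>2"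
  have bestx: "best_approx t1 t2 t3 (x l)" if "1 \<le> l" for l using x_best that by auto
  have xpos: "0 < x l" if "1 \<le> l" for l using bestx[OF that] by (simp add: best_approx_def)
  have xlt: "x l < x (Suc l)" if "1 \<le> l" for l
    using x_mono that by (auto simp: strict_mono_on_def)
  have zeq: "ze (x l) = max \<bar>e1 l\<bar> (max \<bar>e2 l\<bar> \<bar>e3 l\<bar>)" if "1 \<le> l" for l
    using z_def[OF that] unfolding ze_def zeta_alt e1_def e2_def e3_def X_def by simp
  have ehalf: "\<bar>e1 l\<bar> \<le> 1/2 \<and> \<bar>e2 l\<bar> \<le> 1/2 \<and> \<bar>e3 l\<bar> \<le> 1/2" if "1 \<le> l" for l
    using z_def[OF that] nd_half[of "t1 * real_of_int (x l)"] nd_half[of "t2 * real_of_int (x l)"]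
      nd_half[of "t3 * real_of_int (x l)"] unfolding e1_def e2_def e3_def X_def by simp
  have F4: "ze (x l) \<le> max \<bar>t1 * real_of_int n - Y1\<bar> (max \<bar>t2 * real_of_int n - Y2\<bar> \<bar>t3 * real_of_int n - Y3\<bar>)"
    if "1 \<le> l" "0 < n" "n < x (Suc l)" "Y1 \<in> \<int>" "Y2 \<in> \<int>" "Y3 \<in> \<int>" for l n Y1 Y2 Y3
  proof -
    have "ze (x l) \<le> ze n" unfolding ze_def using gap_lemma[OF x_mono x_best that(1-3)] .
    also have "\<dots> \<le> max \<bar>t1 * real_of_int n - Y1\<bar> (max \<bar>t2 * real_of_int n - Y2\<bar> \<bar>t3 * real_of_int n - Y3\<bar>)"
      unfolding ze_def zeta_alt using nd_le[OF that(4)] nd_le[OF that(5)] nd_le[OF that(6)]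
      by (intro max.mono) auto
    finally show ?thesis .
  qed
  have rep: "\<exists>i\<in>{1::nat,2,3}. \<exists>kk::int. ze (x l) = \<bar>(if i = 1 then t1 else if i = 2 then t2 else t3) * real_of_int (x l) - kk\<bar>"
    if l1: "1 \<le> l" for l :: nat
  proof -
    obtain k1 where k1: "z l $ 2 = of_int k1" using z_def[OF l1] by (meson Ints_cases)
    obtain k2 where k2: "z l $ 3 = of_int k2" using z_def[OF l1] by (meson Ints_cases)
    obtain k3 where k3: "z l $ 4 = of_int k3" using z_def[OF l1] by (meson Ints_cases)
    have "ze (x l) = \<bar>t1 * real_of_int (x l) - k1\<bar> \<or> ze (x l) = \<bar>t2 * real_of_int (x l) - k2\<bar> \<or> ze (x l) = \<bar>t3 * real_of_int (x l) - k3\<bar>"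
      using zeq[OF l1] k1 k2 k3 unfolding e1_def e2_def e3_def X_def by linarith
    then show ?thesis
    proof (elim disjE)
      assume "ze (x l) = \<bar>t1 * real_of_int (x l) - k1\<bar>"
      then show ?thesis by (intro bexI[of _ "1::nat"] exI[of _ k1]) auto
    next
      assume "ze (x l) = \<bar>t2 * real_of_int (x l) - k2\<bar>"
      then show ?thesis by (intro bexI[of _ "2::nat"] exI[of _ k2]) auto
    next
      assume "ze (x l) = \<bar>t3 * real_of_int (x l) - k3\<bar>"
      then show ?thesis by (intro bexI[of _ "3::nat"] exI[of _ k3]) auto
    qed
  qed
  have zstrict: "ze (x (Suc l)) < ze (x l)" if l: "1 \<le> l" for l
  proof -
    have "ze (x (Suc l)) = Min (ze ` {1..x (Suc l)})" using bestx[of "Suc l"] l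
      unfolding best_approx_def setimg ze_def by auto
    also have "\<dots> \<le> ze (x l)" using xpos[OF l] xlt[OF l] by (intro Min_le) auto
    finally have le: "ze (x (Suc l)) \<le> ze (x l)" .
    have "ze (x (Suc l)) \<noteq> ze (x l)"
    proof
      assume eq: "ze (x (Suc l)) = ze (x l)"
      obtain i :: nat and kk :: int where i: "i \<in> {1,2,3}" and ik: "ze (x l) = \<bar>(if i = 1 then t1 else if i = 2 then t2 else t3) * real_of_int (x l) - kk\<bar>"
        using rep[OF l] by blast
      obtain j :: nat and kk' :: int where j: "j \<in> {1,2,3}" and jk: "ze (x (Suc l)) = \<bar>(if j = 1 then t1 else if j = 2 then t2 else t3) * real_of_int (x (Suc l)) - kk'\<bar>"
        using rep[of "Suc l"] l by (meson le_SucI)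
      define A where "A = (if i = 1 then t1 else if i = 2 then t2 else t3) * real_of_int (x l) - kk"
      define B where "B = (if j = 1 then t1 else if j = 2 then t2 else t3) * real_of_int (x (Suc l)) - kk'"
      have "\<bar>A\<bar> = \<bar>B\<bar>" using eq ik jk unfolding A_def B_def by simp
      then have "A = of_int (1::int) * B \<or> A = of_int (-1::int) * B" by (auto simp: abs_eq_iff)
      then have "x l = x (Suc l)"
      proof (elim disjE)
        assume h: "A = of_int (1::int) * B"
        show ?thesis
          by (rule dist_aux[OF indep xpos[OF l] xpos[of "Suc l"] i j _ h[unfolded A_def B_def]]) (use l in auto)
      next
        assume h: "A = of_int (-1::int) * B"
        show ?thesis
          by (rule dist_aux[OF indep xpos[OF l] xpos[of "Suc l"] i j _ h[unfolded A_def B_def]]) (use l in auto)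
      qed
      then show False using xlt[OF l] by simp
    qed
    with le show ?thesis by simp
  qed
  have pair: "C1 * covol2 L \<le> ze (x l) * X (Suc l) \<and> ze (x l) * X (Suc l) \<le> 2 * covol2 L"
    if "\<nu> \<le> l" "l \<le> k - 1" for l
  proof -
    have l1: "1 \<le> l" using that nu_pos by simp
    have l2: "1 \<le> Suc l" by simp
    define u where "u = z l"
    define v where "v = z (Suc l)"
    define xl where "xl = X l"
    define XX where "XX = X (Suc l)"
    define \<zeta> where "\<zeta> = ze (x l)"
    define \<zeta>' where "\<zeta>' = ze (x (Suc l))"
    have uin: "u \<in> \<pi>" unfolding u_def using z_in that nu_k by simp
    have vin: "v \<in> \<pi>" unfolding v_def using z_in that nu_k by simp
    have xl_pos: "1 \<le> xl" unfolding xl_def X_def using xpos[OF l1] by simp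
    have xlXX: "xl < XX" unfolding xl_def XX_def X_def using xlt[OF l1] by simp
    have u1: "u $ 1 = xl" "u $ 2 = t1 * xl - e1 l" "u $ 3 = t2 * xl - e2 l" "u $ 4 = t3 * xl - e3 l"
      using z_def[OF l1] unfolding u_def xl_def e1_def e2_def e3_def X_def by auto
    have v1: "v $ 1 = XX" "v $ 2 = t1 * XX - e1 (Suc l)" "v $ 3 = t2 * XX - e2 (Suc l)" "v $ 4 = t3 * XX - e3 (Suc l)"
      using z_def[OF l2] unfolding v_def XX_def e1_def e2_def e3_def X_def by auto
    have uint: "\<forall>i. u $ i \<in> \<int>"
      using z_def[OF l1] unfolding u_def forall_4 by auto
    have vint: "\<forall>i. v $ i \<in> \<int>"
      using z_def[OF l2] unfolding v_def forall_4 by auto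
    have zz: "\<zeta>' < \<zeta>" unfolding \<zeta>_def \<zeta>'_def using zstrict[OF l1] .
    have zq: "\<zeta> = max \<bar>e1 l\<bar> (max \<bar>e2 l\<bar> \<bar>e3 l\<bar>)" unfolding \<zeta>_def using zeq[OF l1] .
    have zq': "\<zeta>' = max \<bar>e1 (Suc l)\<bar> (max \<bar>e2 (Suc l)\<bar> \<bar>e3 (Suc l)\<bar>)" unfolding \<zeta>'_def using zeq[OF l2] .
    have z'0: "0 \<le> \<zeta>'" using zq' by (simp add: le_max_iff_disj)
    have zpos: "0 < \<zeta>" using zz z'0 by simp
    have eb: "\<bar>e1 l\<bar> \<le> \<zeta>" "\<bar>e2 l\<bar> \<le> \<zeta>" "\<bar>e3 l\<bar> \<le> \<zeta>" using zq by (auto simp: le_max_iff_disj)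
    have eb': "\<bar>e1 (Suc l)\<bar> \<le> \<zeta>'" "\<bar>e2 (Suc l)\<bar> \<le> \<zeta>'" "\<bar>e3 (Suc l)\<bar> \<le> \<zeta>'" using zq' by (auto simp: le_max_iff_disj)
    define D1 where "D1 = XX * e1 l - xl * e1 (Suc l)"
    define D2 where "D2 = XX * e2 l - xl * e2 (Suc l)"
    define D3 where "D3 = XX * e3 l - xl * e3 (Suc l)"
    define M where "M = max \<bar>D1\<bar> (max \<bar>D2\<bar> \<bar>D3\<bar>)"
    have S1: "1 \<le> S" unfolding S_def by simp
    have Mbound: "XX * \<zeta> \<le> 2 * M"
    proof -
      have n0: "0 < x (Suc l) - x l" "x (Suc l) - x l < x (Suc l)" using xlt[OF l1] xpos[OF l1] by auto
      have Yint: "v $ 2 - u $ 2 \<in> \<int>" "v $ 3 - u $ 3 \<in> \<int>" "v $ 4 - u $ 4 \<in> \<int>"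
        using uint vint by (auto intro: Ints_diff)
      have nX: "real_of_int (x (Suc l) - x l) = XX - xl" by (simp add: XX_def xl_def X_def)
      have "\<zeta> \<le> max \<bar>t1 * real_of_int (x (Suc l) - x l) - (v $ 2 - u $ 2)\<bar>
          (max \<bar>t2 * real_of_int (x (Suc l) - x l) - (v $ 3 - u $ 3)\<bar> \<bar>t3 * real_of_int (x (Suc l) - x l) - (v $ 4 - u $ 4)\<bar>)"
        unfolding \<zeta>_def by (rule F4[OF l1 n0 Yint])
      also have "\<dots> = max \<bar>e1 (Suc l) - e1 l\<bar> (max \<bar>e2 (Suc l) - e2 l\<bar> \<bar>e3 (Suc l) - e3 l\<bar>)"
        unfolding nX u1 v1 by (simp add: algebra_simps)
      finally have zd: "\<zeta> \<le> \<bar>e1 (Suc l) - e1 l\<bar> \<or> \<zeta> \<le> \<bar>e2 (Suc l) - e2 l\<bar> \<or> \<zeta> \<le> \<bar>e3 (Suc l) - e3 l\<bar>"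
        by (simp add: le_max_iff_disj)
      have xl0: "0 < xl" using xl_pos by simp
      have MD: "\<bar>D1\<bar> \<le> M" "\<bar>D2\<bar> \<le> M" "\<bar>D3\<bar> \<le> M" unfolding M_def by (auto simp: le_max_iff_disj)
      have c1: "XX*\<bar>e1 l\<bar> \<le> M + xl*\<zeta>' \<and> XX*\<bar>e1 (Suc l) - e1 l\<bar> \<le> M + (XX - xl)*\<zeta>'"
        by (rule coord_bound[OF eb'(1) MD(1) D1_def xl0 xlXX])
      have c2: "XX*\<bar>e2 l\<bar> \<le> M + xl*\<zeta>' \<and> XX*\<bar>e2 (Suc l) - e2 l\<bar> \<le> M + (XX - xl)*\<zeta>'"
        by (rule coord_bound[OF eb'(2) MD(2) D2_def xl0 xlXX])
      have c3: "XX*\<bar>e3 l\<bar> \<le> M + xl*\<zeta>' \<and> XX*\<bar>e3 (Suc l) - e3 l\<bar> \<le> M + (XX - xl)*\<zeta>'"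
        by (rule coord_bound[OF eb'(3) MD(3) D3_def xl0 xlXX])
      have XXp: "0 \<le> XX" using xl0 xlXX by simp
      have z1: "\<zeta> \<le> \<bar>e1 l\<bar> \<or> \<zeta> \<le> \<bar>e2 l\<bar> \<or> \<zeta> \<le> \<bar>e3 l\<bar>" using zq by (auto simp: max_def)
      have A1: "XX * \<zeta> \<le> M + xl*\<zeta>'"
        using z1 c1 c2 c3 mult_left_mono[OF _ XXp, of \<zeta> "\<bar>e1 l\<bar>"] mult_left_mono[OF _ XXp, of \<zeta> "\<bar>e2 l\<bar>"]
          mult_left_mono[OF _ XXp, of \<zeta> "\<bar>e3 l\<bar>"] by linarith
      have A2: "XX * \<zeta> \<le> M + (XX - xl)*\<zeta>'"
        using zd c1 c2 c3 mult_left_mono[OF _ XXp, of \<zeta> "\<bar>e1 (Suc l) - e1 l\<bar>"] mult_left_mono[OF _ XXp, of \<zeta> "\<bar>e2 (Suc l) - e2 l\<bar>"]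
          mult_left_mono[OF _ XXp, of \<zeta> "\<bar>e3 (Suc l) - e3 l\<bar>"] by linarith
      have "XX * \<zeta>' \<le> XX * \<zeta>" using zz XXp by (intro mult_left_mono) auto
      then show ?thesis using A1 A2 by (simp add: algebra_simps)
    qed
    have m1: "u $ 1 * v $ 2 - u $ 2 * v $ 1 = D1" unfolding u1 v1 D1_def by (simp add: algebra_simps)
    have m2: "u $ 1 * v $ 3 - u $ 3 * v $ 1 = D2" unfolding u1 v1 D2_def by (simp add: algebra_simps)
    have m3: "u $ 1 * v $ 4 - u $ 4 * v $ 1 = D3" unfolding u1 v1 D3_def by (simp add: algebra_simps)
    have gram_ge: "M\<^sup>2 \<le> gram u v"
    proof -
      have g: "D1\<^sup>2 \<le> gram u v \<and> D2\<^sup>2 \<le> gram u v \<and> D3\<^sup>2 \<le> gram u v"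
        unfolding gram_minors m1 m2 m3 by (simp add: add_increasing add_increasing2)
      have "M = \<bar>D1\<bar> \<or> M = \<bar>D2\<bar> \<or> M = \<bar>D3\<bar>" unfolding M_def by (auto simp: max_def)
      then show ?thesis using g by auto
    qed
    have gram_le: "gram u v \<le> (2 * sqrt (3 * S) * XX * \<zeta>)\<^sup>2"
    proof -
      define \<tau> where "\<tau> = xl / XX"
      have XXp: "0 < XX" using xl_pos xlXX by simp
      have tX: "\<tau> * XX = xl" unfolding \<tau>_def using XXp by simp
      have t0: "0 < \<tau>" "\<tau> < 1" unfolding \<tau>_def using XXp xl_pos xlXX by auto
      have w1: "(u - \<tau> *\<^sub>R v) $ 1 = 0" using tX by (simp add: u1 v1)
      have w2: "(u - \<tau> *\<^sub>R v) $ 2 = \<tau> * e1 (Suc l) - e1 l"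
      proof -
        have "(u - \<tau> *\<^sub>R v) $ 2 = t1 * (xl - \<tau> * XX) + (\<tau> * e1 (Suc l) - e1 l)" by (simp add: u1 v1 algebra_simps)
        then show ?thesis using tX by simp
      qed
      have w3: "(u - \<tau> *\<^sub>R v) $ 3 = \<tau> * e2 (Suc l) - e2 l"
      proof -
        have "(u - \<tau> *\<^sub>R v) $ 3 = t2 * (xl - \<tau> * XX) + (\<tau> * e2 (Suc l) - e2 l)" by (simp add: u1 v1 algebra_simps)
        then show ?thesis using tX by simp
      qed
      have w4: "(u - \<tau> *\<^sub>R v) $ 4 = \<tau> * e3 (Suc l) - e3 l"
      proof -
        have "(u - \<tau> *\<^sub>R v) $ 4 = t3 * (xl - \<tau> * XX) + (\<tau> * e3 (Suc l) - e3 l)" by (simp add: u1 v1 algebra_simps)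
        then show ?thesis using tX by simp
      qed
      have ww: "(u - \<tau> *\<^sub>R v) \<bullet> (u - \<tau> *\<^sub>R v) = (\<tau> * e1 (Suc l) - e1 l)\<^sup>2 + (\<tau> * e2 (Suc l) - e2 l)\<^sup>2 + (\<tau> * e3 (Suc l) - e3 l)\<^sup>2"
        unfolding inner_vec_def sum_4 w1 w2 w3 w4 by (simp add: power2_eq_square)
      have tb: "\<bar>\<tau> * e\<bar> \<le> \<zeta>" if "\<bar>e\<bar> \<le> \<zeta>'" for e
      proof -
        have "\<bar>\<tau> * e\<bar> = \<tau> * \<bar>e\<bar>" using t0 by (simp add: abs_mult)
        also have "\<dots> \<le> 1 * \<zeta>'" using t0 that z'0 by (intro mult_mono) auto
        finally show ?thesis using zz by simp
      qed
      have sb: "(\<tau> * e' - e)\<^sup>2 \<le> (2 * \<zeta>)\<^sup>2" if "\<bar>e'\<bar> \<le> \<zeta>'" "\<bar>e\<bar> \<le> \<zeta>" for e e'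
        using tb[OF that(1)] that(2) by (intro sq_bound) linarith
      have wwb: "(u - \<tau> *\<^sub>R v) \<bullet> (u - \<tau> *\<^sub>R v) \<le> 12 * \<zeta>\<^sup>2"
        unfolding ww using sb[OF eb'(1) eb(1)] sb[OF eb'(2) eb(2)] sb[OF eb'(3) eb(3)]
        by (simp add: power_mult_distrib)
      have vb: "(t * XX - e)\<^sup>2 \<le> ((\<bar>t\<bar> + 1/2) * XX)\<^sup>2" if "\<bar>e\<bar> \<le> 1/2" for t e
      proof (rule sq_bound)
        have "\<bar>t * XX - e\<bar> \<le> \<bar>t * XX\<bar> + \<bar>e\<bar>" by (rule abs_triangle_ineq4)
        also have "\<bar>t * XX\<bar> = \<bar>t\<bar> * XX" using XXp by (simp add: abs_mult)
        finally have "\<bar>t * XX - e\<bar> \<le> \<bar>t\<bar> * XX + 1/2" using that by linarith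
        also have "\<dots> \<le> (\<bar>t\<bar> + 1/2) * XX" using xl_pos xlXX by (simp add: algebra_simps)
        finally show "\<bar>t * XX - e\<bar> \<le> (\<bar>t\<bar> + 1/2) * XX" .
      qed
      have eh: "\<bar>e1 (Suc l)\<bar> \<le> 1/2" "\<bar>e2 (Suc l)\<bar> \<le> 1/2" "\<bar>e3 (Suc l)\<bar> \<le> 1/2" using ehalf[OF l2] by auto
      have vv: "v \<bullet> v = XX\<^sup>2 + (t1 * XX - e1 (Suc l))\<^sup>2 + (t2 * XX - e2 (Suc l))\<^sup>2 + (t3 * XX - e3 (Suc l))\<^sup>2"
        unfolding inner_vec_def sum_4 by (simp add: v1 power2_eq_square)
      have vvb: "v \<bullet> v \<le> XX\<^sup>2 * S"
      proof -
        have "v \<bullet> v \<le> XX\<^sup>2 + ((\<bar>t1\<bar> + 1/2) * XX)\<^sup>2 + ((\<bar>t2\<bar> + 1/2) * XX)\<^sup>2 + ((\<bar>t3\<bar> + 1/2) * XX)\<^sup>2"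
          unfolding vv using vb[OF eh(1), of t1] vb[OF eh(2), of t2] vb[OF eh(3), of t3] by linarith
        also have "\<dots> = XX\<^sup>2 * S" unfolding S_def by (simp add: power_mult_distrib power2_eq_square algebra_simps)
        finally show ?thesis .
      qed
      have "gram u v \<le> (v \<bullet> v) * ((u - \<tau> *\<^sub>R v) \<bullet> (u - \<tau> *\<^sub>R v))" by (rule gram_le)
      also have "\<dots> \<le> (XX\<^sup>2 * S) * (12 * \<zeta>\<^sup>2)"
        using vvb wwb S1 by (intro mult_mono) auto
      also have "\<dots> = (2 * sqrt (3 * S) * XX * \<zeta>)\<^sup>2"
        using S_def by (simp add: power_mult_distrib)
      finally show ?thesis .
    qed
    have gpos: "0 < gram u v"
    proof -
      have "0 < XX * \<zeta>" using xl_pos xlXX zpos by simp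
      then have "0 < M" using Mbound by simp
      then show ?thesis using gram_ge by (smt (verit) zero_less_power)
    qed
    have cov: "covol2 L = sqrt (gram u v)"
    proof -
      have v0: "v \<noteq> 0"
      proof
        assume "v = 0"
        then have "0 *\<^sub>R u + 1 *\<^sub>R v = 0" by simp
        from gram_indep[OF gpos this] show False by simp
      qed
      have unv: "u \<notin> span {v}"
      proof
        assume "u \<in> span {v}"
        then obtain c where "u = c *\<^sub>R v" by (auto simp: span_singleton)
        then have "1 *\<^sub>R u + (- c) *\<^sub>R v = 0" by simp
        from gram_indep[OF gpos this] show False by simp
      qed
      have uv: "u \<noteq> v" using unv by (metis span_base singletonI)
      have ind: "independent {u, v}" using v0 unv uv by (simp add: independent_insert)
      have "\<pi> \<subseteq> span {u, v}"
        using card_eq_dim[of "{u, v}" \<pi>] ind uin vin uv pi_dim by simp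
      then have rep2: "\<exists>\<alpha> \<beta>. w = \<alpha> *\<^sub>R u + \<beta> *\<^sub>R v" if "w \<in> \<pi>" for w
      proof -
        have "w \<in> span (insert u {v})" using that \<open>\<pi> \<subseteq> span {u, v}\<close> by auto
        then obtain \<alpha> where "w - \<alpha> *\<^sub>R u \<in> span {v}" by (auto simp: span_breakdown_eq)
        then obtain \<beta> where "w - \<alpha> *\<^sub>R u = \<beta> *\<^sub>R v" by (auto simp: span_singleton)
        then have "w = \<alpha> *\<^sub>R u + \<beta> *\<^sub>R v" by (simp add: algebra_simps)
        then show ?thesis by blast
      qed
      define Zs where "Zs = {of_int a *\<^sub>R u + of_int b *\<^sub>R v | a b. True}"
      have combint: "\<forall>i. (a *\<^sub>R u + b *\<^sub>R v) $ i \<in> \<int>" if "a \<in> \<int>" "b \<in> \<int>" for a b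
        using uint vint that by (auto intro!: Ints_add Ints_mult)
      have F5: False if ab: "0 \<le> a" "a < 1" "0 \<le> b" "b < 1" "0 < a + b" "a + b \<le> 1"
        and pint: "\<forall>i. (a *\<^sub>R u + b *\<^sub>R v) $ i \<in> \<int>" for a b
      proof -
        let ?p = "a *\<^sub>R u + b *\<^sub>R v"
        have "?p $ 1 \<in> \<int>" using pint by blast
        then obtain N where N: "?p $ 1 = of_int N" by (meson Ints_cases)
        have pN: "real_of_int N = a * xl + b * XX" using N u1 v1 by simp
        have xl0: "0 < xl" using xl_pos by simp
        have "0 < a * xl + b * XX"
        proof (cases "a = 0")
          case True then have "0 < b" using ab by simp
          then show ?thesis using True xl0 xlXX by simp
        next
          case False then have "0 < a" using ab by simp
          then have "0 < a * xl" using xl0 by simp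
          moreover have "0 \<le> b * XX" using ab xl0 xlXX by simp
          ultimately show ?thesis by simp
        qed
        then have Npos: "0 < N" using pN by simp
        have "a * xl + b * XX < XX"
        proof (cases "a = 0")
          case True then show ?thesis using ab xl0 xlXX by simp
        next
          case False then have "0 < a" using ab by simp
          then have "a * xl < a * XX" using xlXX by simp
          moreover have "(a + b) * XX \<le> 1 * XX" using ab xl0 xlXX by (intro mult_right_mono) auto
          ultimately show ?thesis by (simp add: algebra_simps)
        qed
        then have Nlt: "N < x (Suc l)" using pN unfolding XX_def X_def by simp
        have Yint: "?p $ 2 \<in> \<int>" "?p $ 3 \<in> \<int>" "?p $ 4 \<in> \<int>" using pint by auto
        have "\<zeta> \<le> max \<bar>t1 * real_of_int N - ?p $ 2\<bar> (max \<bar>t2 * real_of_int N - ?p $ 3\<bar> \<bar>t3 * real_of_int N - ?p $ 4\<bar>)"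
          unfolding \<zeta>_def by (rule F4[OF l1 Npos Nlt Yint])
        also have "\<dots> = max \<bar>a * e1 l + b * e1 (Suc l)\<bar> (max \<bar>a * e2 l + b * e2 (Suc l)\<bar> \<bar>a * e3 l + b * e3 (Suc l)\<bar>)"
          unfolding pN by (simp add: u1 v1 algebra_simps)
        finally have zd: "\<zeta> \<le> \<bar>a * e1 l + b * e1 (Suc l)\<bar> \<or> \<zeta> \<le> \<bar>a * e2 l + b * e2 (Suc l)\<bar> \<or> \<zeta> \<le> \<bar>a * e3 l + b * e3 (Suc l)\<bar>"
          by (simp add: le_max_iff_disj)
        have cb: "\<bar>a * e + b * e'\<bar> \<le> a * \<zeta> + b * \<zeta>'" if "\<bar>e\<bar> \<le> \<zeta>" "\<bar>e'\<bar> \<le> \<zeta>'" for e e'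
        proof -
          have "\<bar>a * e + b * e'\<bar> \<le> \<bar>a * e\<bar> + \<bar>b * e'\<bar>" by (rule abs_triangle_ineq)
          also have "\<dots> = a * \<bar>e\<bar> + b * \<bar>e'\<bar>" using ab by (simp add: abs_mult)
          also have "\<dots> \<le> a * \<zeta> + b * \<zeta>'" using ab that by (intro add_mono mult_left_mono) auto
          finally show ?thesis .
        qed
        have "\<zeta> \<le> a * \<zeta> + b * \<zeta>'" using zd cb[OF eb(1) eb'(1)] cb[OF eb(2) eb'(2)] cb[OF eb(3) eb'(3)] by linarith
        moreover have "a * \<zeta> + b * \<zeta>' < \<zeta>"
        proof (cases "b = 0")
          case True then show ?thesis using ab zpos by simp
        next
          case False then have "0 < b" using ab by simp
          then have "b * \<zeta>' < b * \<zeta>" using zz by simp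
          moreover have "(a + b) * \<zeta> \<le> 1 * \<zeta>" using ab zpos by (intro mult_right_mono) auto
          ultimately show ?thesis by (simp add: algebra_simps)
        qed
        ultimately show False by simp
      qed
      have ZL: "Zs = L"
      proof
        show "Zs \<subseteq> L"
        proof
          fix w assume "w \<in> Zs"
          then obtain a b where w: "w = of_int a *\<^sub>R u + of_int b *\<^sub>R v" unfolding Zs_def by auto
          have "w \<in> \<pi>" unfolding w using uin vin pi_sub by (intro subspace_add subspace_scale) auto
          moreover have "\<forall>i. w $ i \<in> \<int>" unfolding w by (rule combint) auto
          ultimately show "w \<in> L" unfolding L_def int_points_def by auto
        qed
      next
        show "L \<subseteq> Zs"
        proof
          fix w assume "w \<in> L"
          then have win: "w \<in> \<pi>" and wint: "\<forall>i. w $ i \<in> \<int>" unfolding L_def int_points_def by auto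
          obtain \<alpha> \<beta> where wab: "w = \<alpha> *\<^sub>R u + \<beta> *\<^sub>R v" using rep2[OF win] by blast
          define a where "a = \<alpha> - of_int \<lfloor>\<alpha>\<rfloor>"
          define b where "b = \<beta> - of_int \<lfloor>\<beta>\<rfloor>"
          have a01: "0 \<le> a" "a < 1" unfolding a_def by linarith+
          have b01: "0 \<le> b" "b < 1" unfolding b_def by linarith+
          have pe: "a *\<^sub>R u + b *\<^sub>R v = w - (of_int \<lfloor>\<alpha>\<rfloor> *\<^sub>R u + of_int \<lfloor>\<beta>\<rfloor> *\<^sub>R v)"
            unfolding a_def b_def wab by (simp add: algebra_simps)
          have pint: "\<forall>i. (a *\<^sub>R u + b *\<^sub>R v) $ i \<in> \<int>"
            unfolding pe using wint combint[of "of_int \<lfloor>\<alpha>\<rfloor>" "of_int \<lfloor>\<beta>\<rfloor>"] by (auto intro: Ints_diff)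
          have ab0: "a = 0 \<and> b = 0"
          proof (rule ccontr)
            assume nz: "\<not> (a = 0 \<and> b = 0)"
            show False
            proof (cases "a + b \<le> 1")
              case True
              have "0 < a + b" using nz a01 b01 by linarith
              then show False using F5[OF a01 b01 _ True pint] by simp
            next
              case False
              have qe: "(1 - a) *\<^sub>R u + (1 - b) *\<^sub>R v = (1 *\<^sub>R u + 1 *\<^sub>R v) - (a *\<^sub>R u + b *\<^sub>R v)"
                by (simp add: algebra_simps)
              have qint: "\<forall>i. ((1 - a) *\<^sub>R u + (1 - b) *\<^sub>R v) $ i \<in> \<int>"
                unfolding qe using pint combint[of 1 1] by (auto intro: Ints_diff simp del: scaleR_one)
              show False using F5[of "1 - a" "1 - b", OF _ _ _ _ _ _ qint] False a01 b01 by linarith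
            qed
          qed
          have "w = of_int \<lfloor>\<alpha>\<rfloor> *\<^sub>R u + of_int \<lfloor>\<beta>\<rfloor> *\<^sub>R v"
            using pe ab0 by simp
          then show "w \<in> Zs" unfolding Zs_def by blast
        qed
      qed
      have uZ: "u \<in> Zs" unfolding Zs_def by (rule CollectI, rule exI[of _ 1], rule exI[of _ 0]) simp
      have vZ: "v \<in> Zs" unfolding Zs_def by (rule CollectI, rule exI[of _ 0], rule exI[of _ 1]) simp
      show ?thesis unfolding covol2_def
      proof (rule the_equality)
        show "\<exists>u' v'. u' \<in> L \<and> v' \<in> L \<and> L = {of_int a *\<^sub>R u' + of_int b *\<^sub>R v' | a b. True} \<and>
            sqrt (gram u v) = sqrt ((u' \<bullet> u') * (v' \<bullet> v') - (u' \<bullet> v')\<^sup>2)"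
          using uZ vZ ZL unfolding gram_def Zs_def by blast
      next
        fix d assume "\<exists>u' v'. u' \<in> L \<and> v' \<in> L \<and> L = {of_int a *\<^sub>R u' + of_int b *\<^sub>R v' | a b. True} \<and>
            d = sqrt ((u' \<bullet> u') * (v' \<bullet> v') - (u' \<bullet> v')\<^sup>2)"
        then obtain u' v' where u'L: "u' \<in> L" and v'L: "v' \<in> L"
          and L': "L = {of_int a *\<^sub>R u' + of_int b *\<^sub>R v' | a b. True}" and d: "d = sqrt (gram u' v')"
          unfolding gram_def by blast
        obtain a b where u': "u' = of_int a *\<^sub>R u + of_int b *\<^sub>R v" using u'L ZL unfolding Zs_def by blast
        obtain c dd where v': "v' = of_int c *\<^sub>R u + of_int dd *\<^sub>R v" using v'L ZL unfolding Zs_def by blast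
        obtain p q where up: "u = of_int p *\<^sub>R u' + of_int q *\<^sub>R v'" using uZ ZL L' by blast
        obtain r s0 where vr: "v = of_int r *\<^sub>R u' + of_int s0 *\<^sub>R v'" using vZ ZL L' by blast
        have "(of_int (p*a + q*c) - 1) *\<^sub>R u + of_int (p*b + q*dd) *\<^sub>R v = 0"
        proof -
          have "u = of_int (p*a + q*c) *\<^sub>R u + of_int (p*b + q*dd) *\<^sub>R v"
            using up unfolding u' v' by (simp add: algebra_simps scaleR_add_right)
          then show ?thesis by (simp add: algebra_simps)
        qed
        from gram_indep[OF gpos this] have h: "real_of_int (p*a + q*c) - 1 = 0" "real_of_int (p*b + q*dd) = 0" by blast+
        have e1': "p*a + q*c = 1" "p*b + q*dd = 0"
          using h by (metis eq_iff_diff_eq_0 of_int_1 of_int_eq_iff, metis of_int_0 of_int_eq_iff)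
        have "of_int (r*a + s0*c) *\<^sub>R u + (of_int (r*b + s0*dd) - 1) *\<^sub>R v = 0"
        proof -
          have "v = of_int (r*a + s0*c) *\<^sub>R u + of_int (r*b + s0*dd) *\<^sub>R v"
            using vr unfolding u' v' by (simp add: algebra_simps scaleR_add_right)
          then show ?thesis by (simp add: algebra_simps)
        qed
        from gram_indep[OF gpos this] have h': "real_of_int (r*a + s0*c) = 0" "real_of_int (r*b + s0*dd) - 1 = 0" by blast+
        have e2': "r*a + s0*c = 0" "r*b + s0*dd = 1"
          using h' by (metis of_int_0 of_int_eq_iff, metis eq_iff_diff_eq_0 of_int_1 of_int_eq_iff)
        have "(p * s0 - q*r) * (a*dd - b*c) = (p*a + q*c) * (r*b + s0*dd) - (p*b + q*dd) * (r*a + s0*c)"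
          by (simp add: algebra_simps)
        then have "(p * s0 - q*r) * (a*dd - b*c) = 1" using e1' e2' by simp
        then have "a*dd - b*c = 1 \<or> a*dd - b*c = -1" by (auto simp: zmult_eq_1_iff)
        then have sq1: "(real_of_int a * real_of_int dd - real_of_int b * real_of_int c)\<^sup>2 = 1"
          by (metis (mono_tags, opaque_lifting) of_int_1 of_int_diff of_int_minus of_int_mult power2_minus power_one)
        have "gram u' v' = gram u v" unfolding u' v' gram_comb sq1 by simp
        then show "d = sqrt (gram u v)" using d by simp
      qed
    qed
    have M0: "0 \<le> M" unfolding M_def by simp
    have "M \<le> sqrt (gram u v)" using gram_ge M0 real_le_rsqrt by blast
    then have A: "XX * \<zeta> \<le> 2 * covol2 L" using Mbound cov by simp
    have "sqrt (gram u v) \<le> 2 * sqrt (3 * S) * XX * \<zeta>"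
      using gram_le real_sqrt_le_mono[OF gram_le] xl_pos xlXX zpos S1 by simp
    then have "C1 * sqrt (gram u v) \<le> C1 * (2 * sqrt (3 * S) * XX * \<zeta>)"
      unfolding C1_def by (intro mult_left_mono) auto
    also have "\<dots> = XX * \<zeta>"
    proof -
      have "0 < sqrt (3 * S)" using S1 by simp
      moreover have "C1 = 1 / (2 * sqrt (3 * S))" unfolding C1_def S_def by simp
      ultimately show ?thesis by simp
    qed
    finally have B: "C1 * covol2 L \<le> XX * \<zeta>" using cov by simp
    show ?thesis using A B unfolding XX_def \<zeta>_def by (simp add: mult.commute)
  qed
  have P1: "\<forall>l. \<nu> \<le> l \<and> l \<le> k - 1 \<longrightarrow> C1 * covol2 L \<le> ze (x l) * X (Suc l) \<and> ze (x l) * X (Suc l) \<le> 2 * covol2 L"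
    using pair by blast
  have "ze (x \<nu>) * X (Suc \<nu>) \<le> 2 * covol2 L" using pair[of \<nu>] nu_k by auto
  moreover have "min (ze (x \<nu>) * X (Suc \<nu>)) (ze (x (k - 1)) * X k) \<le> ze (x \<nu>) * X (Suc \<nu>)"
    by simp
  ultimately have P2: "covol2 L \<ge> 1/2 * min (ze (x \<nu>) * X (Suc \<nu>)) (ze (x (k - 1)) * X k)"
    by linarith
  show ?thesis using P1 P2 unfolding C1_def L_def ze_def X_def by simp
qed

end
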